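(* Let $V$ be a finite vertex set with $|V|=n$ and $\{k_u\}_{u\in V}$ a degree sequence with $k_u\ge 1$ for all $u$, such that some vertex has odd degree and some vertex $v$ has $k_v-(n-1)$ negative or odd. Then every multiloop-graph $G$ on $V$ with degree sequence $\{k_u\}$ can be transformed, by a finite sequence of double edge swaps all of whose intermediate graphs are multiloop-graphs with degree sequence $\{k_u\}$, into a multiloop-graph having exactly $\lfloor k_u/2\rfloor$ self-loops at every vertex $u$ (so that its non-loop edges form a simple graph with degree sequence $\{k_u \bmod 2\}$, i.e. a perfect matching on the odd-degree vertices).
   Context: All graphs are on a fixed labeled vertex set $V$; a graph is a multiset $E$ of unordered pairs $(u,v)$ with $u,v\in V$, where a pair $(u,u)$ is a self-loop. The degree $k_u$ of $u$ is the number of edge-endpoints at $u$, so each self-loop at $u$ contributes $2$ to $k_u$. A multiloop-graph is such a graph in which self-loops may occur with any multiplicity but every non-loop edge $(u,v)$, $u\ne v$, occurs at most once. A double edge swap $(u,v),(x,y)\leadsto(u,x),(v,y)$ removes one copy of each of two edge occurrences $(u,v)$ and $(x,y)$ (loops allowed) and adds the edges $(u,x)$ and $(v,y)$; either pairing of endpoints may be used. It preserves the degree sequence. *)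

theory Defs
  imports Main "HOL-Library.Multiset" "HOL-Library.Uprod"
begin

definition graph_on :: "'a set \<Rightarrow> 'a uprod multiset \<Rightarrow> bool" where
  "graph_on V E \<longleftrightarrow> (\<forall>e\<in>#E. set_uprod e \<subseteq> V)"

definition deg :: "'a uprod multiset \<Rightarrow> 'a \<Rightarrow> nat" where
  "deg E u = sum_mset (image_mset
      (\<lambda>e. if e = Upair u u then 2 else if u \<in> set_uprod e then 1 else 0) E)"

definition multiloop_graph :: "'a set \<Rightarrow> 'a uprod multiset \<Rightarrow> bool" where
  "multiloop_graph V E \<longleftrightarrow> graph_on V E \<and>
     (\<forall>u v. u \<noteq> v \<longrightarrow> count E (Upair u v) \<le> 1)"

text \<open>Double edge swap (u,v),(x,y) ~> (u,x),(v,y); the other pairing is obtained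
  by renaming x,y since Upair x y = Upair y x.\<close>
definition double_edge_swap :: "'a uprod multiset \<Rightarrow> 'a uprod multiset \<Rightarrow> bool" where
  "double_edge_swap E E' \<longleftrightarrow> (\<exists>u v x y.
      Upair u v \<in># E \<and> Upair x y \<in># E - {#Upair u v#} \<and>
      E' = E - {#Upair u v, Upair x y#} + {#Upair u x, Upair v y#})"

definition swap_step :: "'a set \<Rightarrow> ('a \<Rightarrow> nat) \<Rightarrow> 'a uprod multiset \<Rightarrow> 'a uprod multiset \<Rightarrow> bool" where
  "swap_step V k E E' \<longleftrightarrow> double_edge_swap E E' \<and> multiloop_graph V E' \<and>
     (\<forall>u\<in>V. deg E' u = k u)"

end

theory Submission
  imports Defs
begin

definition nb :: "'a uprod multiset \<Rightarrow> 'a \<Rightarrow> 'a set" where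
  "nb E y = {z. z \<noteq> y \<and> Upair y z \<in># E}"

definition mu :: "'a uprod multiset \<Rightarrow> nat" where
  "mu E = size (filter_mset proper_uprod E)"

lemma deg_add: "deg (A + B) u = deg A u + deg B u"
  by (simp add: deg_def)

lemma deg_add_mset: "deg (add_mset x M) u = deg {#x#} u + deg M u"
  by (simp add: deg_def)

lemma deg_single: "deg {#Upair p q#} u = (if p = u then 1 else 0) + (if q = u then 1 else 0)"
  by (auto simp: deg_def)

lemma deg_gen: "deg E y = 2 * count E (Upair y y) +
   size (filter_mset (\<lambda>e. e \<noteq> Upair y y \<and> y \<in> set_uprod e) E)"
proof (induction E)
  case empty then show ?case by (simp add: deg_def)
next
  case (add x E)
  obtain a b where x: "x = Upair a b" by (cases x)
  have "deg (add_mset x E) y = deg {#x#} y + deg E y"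
    using deg_add[of "{#x#}" E y] by simp
  then show ?case using add x by (auto simp: deg_single)
qed

lemma deg_formula:
  fixes E :: "'a uprod multiset"
  assumes "\<forall>u v. u \<noteq> v \<longrightarrow> count E (Upair u v) \<le> 1"
  shows "deg E y = 2 * count E (Upair y y) + card (nb E y)"
proof -
  have fin: "finite (nb E y)"
  proof -
    have "nb E y \<subseteq> \<Union> (set_uprod ` set_mset E)" by (force simp: nb_def)
    then show ?thesis by (rule finite_subset) auto
  qed
  have eq: "filter_mset (\<lambda>e. e \<noteq> Upair y y \<and> y \<in> set_uprod e) E = mset_set (Upair y ` nb E y)"
  proof (rule multiset_eqI)
    fix e :: "'a uprod"
    obtain a b where e: "e = Upair a b" by (cases e)
    show "count (filter_mset (\<lambda>e. e \<noteq> Upair y y \<and> y \<in> set_uprod e) E) e = count (mset_set (Upair y ` nb E y)) e"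
    proof (cases "e \<noteq> Upair y y \<and> y \<in> set_uprod e")
      case True
      then obtain z where z: "e = Upair y z" "z \<noteq> y" using e by auto
      have le: "count E e \<le> 1" using assms z by auto
      have ge: "count E e \<ge> 1" if "e \<in># E" using that by (simp add: Suc_le_eq)
      have "count E e = (if e \<in># E then 1 else 0)" using le ge by (metis le_antisym not_in_iff)
      then show ?thesis using True z fin
        by (auto simp: nb_def count_mset_set')
    next
      case False
      then show ?thesis using fin by (auto simp: nb_def count_mset_set')
    qed
  qed
  have "card (Upair y ` nb E y) = card (nb E y)"
    by (rule card_image) (auto simp: inj_on_def)
  then show ?thesis by (simp add: deg_gen eq)
qed

lemma swap_R:
  fixes R :: "'a uprod multiset"
  assumes ml: "multiloop_graph V (add_mset (Upair a b) (add_mset (Upair c d) R))"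
    and dg: "\<forall>u\<in>V. deg (add_mset (Upair a b) (add_mset (Upair c d) R)) u = k u"
    and c1: "a = c \<or> Upair a c \<notin># R" and c2: "b = d \<or> Upair b d \<notin># R"
    and c3: "a = c \<or> b = d \<or> Upair a c \<noteq> Upair b d"
  shows "swap_step V k (add_mset (Upair a b) (add_mset (Upair c d) R)) (add_mset (Upair a c) (add_mset (Upair b d) R))"
proof -
  let ?E = "add_mset (Upair a b) (add_mset (Upair c d) R)"
  let ?E' = "add_mset (Upair a c) (add_mset (Upair b d) R)"
  have ds: "double_edge_swap ?E ?E'"
    unfolding double_edge_swap_def by (rule exI[of _ a], rule exI[of _ b], rule exI[of _ c], rule exI[of _ d]) simp
  have V: "a \<in> V" "b \<in> V" "c \<in> V" "d \<in> V" and RV: "\<forall>e\<in>#R. set_uprod e \<subseteq> V"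
    using ml by (auto simp: multiloop_graph_def graph_on_def)
  have go: "graph_on V ?E'" using V RV by (auto simp: graph_on_def)
  have cnt: "count ?E' (Upair u v) \<le> 1" if "u \<noteq> v" for u v
  proof -
    have old: "count ?E (Upair u v) \<le> 1" using ml that by (auto simp: multiloop_graph_def)
    show ?thesis
    proof (cases "Upair u v = Upair a c \<or> Upair u v = Upair b d")
      case False
      then have "count ?E' (Upair u v) = count R (Upair u v)" by auto
      also have "\<dots> \<le> count ?E (Upair u v)" by simp
      finally show ?thesis using old by simp
    next
      case True
      then show ?thesis
      proof
        assume h: "Upair u v = Upair a c"
        then have "a \<noteq> c" using that by auto
        then show ?thesis unfolding h using c1 c3 by (auto simp: not_in_iff)
      next
        assume h: "Upair u v = Upair b d"
        then have "b \<noteq> d" using that by auto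
        then show ?thesis unfolding h using c2 c3 by (auto simp: not_in_iff)
      qed
    qed
  qed
  have degeq: "deg ?E u = deg ?E' u" for u
  proof -
    have "deg ?E u = deg {#Upair a b#} u + deg {#Upair c d#} u + deg R u"
      using deg_add_mset[of "Upair a b" "add_mset (Upair c d) R" u] deg_add_mset[of "Upair c d" R u] by linarith
    moreover have "deg ?E' u = deg {#Upair a c#} u + deg {#Upair b d#} u + deg R u"
      using deg_add_mset[of "Upair a c" "add_mset (Upair b d) R" u] deg_add_mset[of "Upair b d" R u] by linarith
    ultimately show ?thesis by (simp add: deg_single)
  qed
  have d2: "\<forall>u\<in>V. deg ?E' u = k u" using degeq dg by simp
  have ml2: "multiloop_graph V ?E'" unfolding multiloop_graph_def using go cnt by blast
  show ?thesis unfolding swap_step_def using ds ml2 d2 by blast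
qed

lemma mu_add_mset: "mu (add_mset x M) = (if proper_uprod x then 1 else 0) + mu M"
  by (simp add: mu_def)

lemma mu_R:
  "mu (add_mset (Upair a c) (add_mset (Upair b d) R)) + (if a \<noteq> b then 1 else 0) + (if c \<noteq> d then 1 else 0)
   = mu (add_mset (Upair a b) (add_mset (Upair c d) R)) + (if a \<noteq> c then 1 else 0) + (if b \<noteq> d then 1 else 0)"
  unfolding mu_add_mset proper_uprod_simps by (cases "a = b"; cases "a = c"; cases "c = d"; cases "b = d") auto

lemma swap_E:
  fixes E :: "'a uprod multiset"
  assumes ml: "multiloop_graph V E" and dg: "\<forall>u\<in>V. deg E u = k u"
    and ab: "Upair a b \<in># E" and cd: "Upair c d \<in># E - {#Upair a b#}"
    and c1: "a = c \<or> Upair a c \<notin># E" and c2: "b = d \<or> Upair b d \<notin># E"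
    and c3: "a = c \<or> b = d \<or> Upair a c \<noteq> Upair b d"
  shows "swap_step V k E (E - {#Upair a b, Upair c d#} + {#Upair a c, Upair b d#})"
    and "mu (E - {#Upair a b, Upair c d#} + {#Upair a c, Upair b d#}) + (if a \<noteq> b then 1 else 0) + (if c \<noteq> d then 1 else 0)
   = mu E + (if a \<noteq> c then 1 else 0) + (if b \<noteq> d then 1 else 0)"
proof -
  define R where "R = E - {#Upair a b, Upair c d#}"
  have E: "E = add_mset (Upair a b) (add_mset (Upair c d) R)"
  proof -
    have 1: "E = add_mset (Upair a b) (E - {#Upair a b#})" using ab by simp
    have 2: "E - {#Upair a b#} = add_mset (Upair c d) (E - {#Upair a b#} - {#Upair c d#})" by (rule insert_DiffM[OF cd, symmetric])
    have 3: "E - {#Upair a b#} - {#Upair c d#} = R" unfolding R_def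
      by (simp add: diff_diff_add add_mset_commute)
    show ?thesis using 1 2 3 by simp
  qed
  have RE: "R \<subseteq># E" unfolding R_def by simp
  have c1': "a = c \<or> Upair a c \<notin># R" using c1 RE by (auto dest: mset_subset_eqD)
  have c2': "b = d \<or> Upair b d \<notin># R" using c2 RE by (auto dest: mset_subset_eqD)
  have E': "E - {#Upair a b, Upair c d#} + {#Upair a c, Upair b d#} = add_mset (Upair a c) (add_mset (Upair b d) R)"
    unfolding R_def by simp
  show "swap_step V k E (E - {#Upair a b, Upair c d#} + {#Upair a c, Upair b d#})"
    unfolding E' using swap_R[of V a b c d R k] ml dg c1' c2' c3 E by simp
  show "mu (E - {#Upair a b, Upair c d#} + {#Upair a c, Upair b d#}) + (if a \<noteq> b then 1 else 0) + (if c \<noteq> d then 1 else 0)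
   = mu E + (if a \<noteq> c then 1 else 0) + (if b \<noteq> d then 1 else 0)"
    unfolding E' using mu_R[of a c b d R] E by simp
qed


definition adj :: "'a uprod multiset \<Rightarrow> 'a \<Rightarrow> 'a \<Rightarrow> bool" where
  "adj E a b \<longleftrightarrow> a \<noteq> b \<and> Upair a b \<in># E"

lemma upair_comm: "Upair a b = Upair b a"
  by simp

lemma adj_sym: "adj E a b \<longleftrightarrow> adj E b a"
  unfolding adj_def by (metis Upair_inject)

lemma mem_swap: "e \<in># E - {#p, q#} + {#r, s#} \<longleftrightarrow> e = r \<or> e = s \<or> count {#p, q#} e < count E e"
  by (auto simp: in_diff_count)

lemma notmem_swap: "e \<notin># E \<Longrightarrow> e \<noteq> r \<Longrightarrow> e \<noteq> s \<Longrightarrow> e \<notin># E - {#p, q#} + {#r, s#}"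
  by (auto simp: in_diff_count not_in_iff)

lemma mem_rem: "x \<in># M \<Longrightarrow> x \<noteq> y \<Longrightarrow> x \<in># M - {#y#}"
  by (simp add: in_diff_count)

lemma op1:
  fixes E :: "'a uprod multiset"
  assumes ml: "multiloop_graph V E" and dg: "\<forall>u\<in>V. deg E u = k u"
    and uv: "adj E u v" and uy: "adj E u y" and vy: "v \<noteq> y" "Upair v y \<notin># E"
  shows "\<exists>E'. (swap_step V k)\<^sup>+\<^sup>+ E E' \<and> mu E' < mu E"
proof -
  have ab: "Upair u v \<in># E" using uv by (simp add: adj_def)
  have neq: "Upair u y \<noteq> Upair u v" using vy uv by auto
  have cd: "Upair u y \<in># E - {#Upair u v#}"
    by (rule mem_rem[OF _ neq]) (use uy in \<open>simp add: adj_def\<close>)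
  note s = swap_E[OF ml dg ab cd, of ]
  have st: "swap_step V k E (E - {#Upair u v, Upair u y#} + {#Upair u u, Upair v y#})"
    using s(1) vy by simp
  have "mu (E - {#Upair u v, Upair u y#} + {#Upair u u, Upair v y#}) < mu E"
    using s(2) vy uv uy by (simp add: adj_def)
  then show ?thesis using st by blast
qed


lemma step_ok:
  "swap_step V k E E' \<Longrightarrow> multiloop_graph V E' \<and> (\<forall>u\<in>V. deg E' u = k u)"
  by (simp add: swap_step_def)

lemma opA:
  fixes E :: "'a uprod multiset"
  assumes ml: "multiloop_graph V E" and dg: "\<forall>u\<in>V. deg E u = k u"
    and LC: "\<forall>a b c. adj E a b \<longrightarrow> adj E a c \<longrightarrow> b \<noteq> c \<longrightarrow> adj E b c"
    and uv: "adj E u v" and uw: "adj E u w" and vw: "v \<noteq> w"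
    and xy: "adj E x y" and xu: "x \<noteq> u" and nux: "Upair u x \<notin># E"
  shows "\<exists>E'. (swap_step V k)\<^sup>+\<^sup>+ E E' \<and> mu E' < mu E"
proof -
  have nadj_ux: "\<not> adj E u x" using nux by (simp add: adj_def)
  have yu: "y \<noteq> u" using xy nux by (metis adj_def upair_comm)
  have nuy: "\<not> adj E u y"
  proof
    assume "adj E u y"
    then have "adj E y u" by (simp add: adj_sym)
    moreover have "adj E y x" using xy by (simp add: adj_sym)
    ultimately have "adj E u x" using LC xu by blast
    then show False using nadj_ux by simp
  qed
  have xv: "x \<noteq> v" using uv nux by (auto simp: adj_def)
  have xw: "x \<noteq> w" using uw nux by (auto simp: adj_def)
  have yv: "y \<noteq> v" using uv nuy by auto
  have yw: "y \<noteq> w" using uw nuy by auto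
  have uv': "u \<noteq> v" "u \<noteq> w" "x \<noteq> y" using uv uw xy by (auto simp: adj_def)
  have nvy: "\<not> adj E v y"
  proof
    assume "adj E v y"
    moreover have "adj E v u" using uv by (simp add: adj_sym)
    ultimately have "adj E u y" using LC yu by blast
    then show False using nuy by simp
  qed
  have nwx: "\<not> adj E w x"
  proof
    assume "adj E w x"
    moreover have "adj E w u" using uw by (simp add: adj_sym)
    ultimately have "adj E u x" using LC xu by blast
    then show False using nadj_ux by simp
  qed
  have nvy': "Upair v y \<notin># E" using nvy yv by (simp add: adj_def)
  have nwx': "Upair w x \<notin># E" using nwx xw by (simp add: adj_def)
  note dist = uv' xu xv xw yu yv yw vw
  have ab: "Upair u v \<in># E" using uv by (simp add: adj_def)
  have neq1: "Upair x y \<noteq> Upair u v" using dist by auto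
  have cd: "Upair x y \<in># E - {#Upair u v#}"
    by (rule mem_rem[OF _ neq1]) (use xy in \<open>simp add: adj_def\<close>)
  define E1 where "E1 = E - {#Upair u v, Upair x y#} + {#Upair u x, Upair v y#}"
  note s1 = swap_E[OF ml dg ab cd]
  have st1: "swap_step V k E E1" unfolding E1_def
    using s1(1) dist nux nvy' by simp
  have mu1: "mu E1 = mu E" unfolding E1_def using s1(2) dist nux nvy' by simp
  have ok1: "multiloop_graph V E1" "\<forall>u\<in>V. deg E1 u = k u" using step_ok[OF st1] by auto
  have ab2: "Upair u w \<in># E1" unfolding E1_def mem_swap using uw dist by (auto simp: adj_def)
  have neq2: "Upair u x \<noteq> Upair u w" using dist by auto
  have cd2: "Upair u x \<in># E1 - {#Upair u w#}"
    by (rule mem_rem[OF _ neq2]) (simp add: E1_def)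
  have nwx1: "Upair w x \<notin># E1" unfolding E1_def
    by (rule notmem_swap[OF nwx']) (use dist in auto)
  define E2 where "E2 = E1 - {#Upair u w, Upair u x#} + {#Upair u u, Upair w x#}"
  note s2 = swap_E[OF ok1 ab2 cd2]
  have st2: "swap_step V k E1 E2" unfolding E2_def
    using s2(1) dist nwx1 by simp
  have mu2: "mu E2 < mu E1" unfolding E2_def using s2(2) dist nwx1 by simp
  have "(swap_step V k)\<^sup>+\<^sup>+ E E2" using st1 st2 by auto
  then show ?thesis using mu1 mu2 by auto
qed


lemma opB:
  fixes E :: "'a uprod multiset"
  assumes ml: "multiloop_graph V E" and dg: "\<forall>u\<in>V. deg E u = k u"
    and LC: "\<forall>a b c. adj E a b \<longrightarrow> adj E a c \<longrightarrow> b \<noteq> c \<longrightarrow> adj E b c"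
    and uv: "adj E u v" and uw: "adj E u w" and uz: "adj E u z"
    and d: "v \<noteq> w" "v \<noteq> z" "w \<noteq> z"
    and xx: "Upair x x \<in># E" and iso: "\<forall>t. \<not> adj E x t"
  shows "\<exists>E'. (swap_step V k)\<^sup>+\<^sup>+ E E' \<and> mu E' < mu E"
proof -
  have xu: "x \<noteq> u" using iso uv by auto
  have xv: "x \<noteq> v" using iso uv by (auto simp: adj_sym)
  have xw: "x \<noteq> w" using iso uw by (auto simp: adj_sym)
  have xz: "x \<noteq> z" using iso uz by (auto simp: adj_sym)
  have uv': "u \<noteq> v" "u \<noteq> w" "u \<noteq> z" using uv uw uz by (auto simp: adj_def)
  have vz: "adj E v z" using LC uv uz d(2) by blast
  have n1: "Upair u x \<notin># E" using iso xu by (metis adj_def upair_comm)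
  have n2: "Upair v x \<notin># E" using iso xv by (metis adj_def upair_comm)
  have n3: "Upair w x \<notin># E" using iso xw by (metis adj_def upair_comm)
  have n4: "Upair x z \<notin># E" using iso xz by (metis adj_def upair_comm)
  note dist = d xu xv xw xz uv'
  have ab: "Upair u v \<in># E" using uv by (simp add: adj_def)
  have neq1: "Upair x x \<noteq> Upair u v" using dist by auto
  have cd: "Upair x x \<in># E - {#Upair u v#}" by (rule mem_rem[OF xx neq1])
  define E1 where "E1 = E - {#Upair u v, Upair x x#} + {#Upair u x, Upair v x#}"
  note s1 = swap_E[OF ml dg ab cd]
  have st1: "swap_step V k E E1" unfolding E1_def using s1(1) dist n1 n2 by simp
  have mu1: "mu E1 = Suc (mu E)" unfolding E1_def using s1(2) dist n1 n2 by simp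
  have ok1: "multiloop_graph V E1" "\<forall>u\<in>V. deg E1 u = k u" using step_ok[OF st1] by auto
  have ab2: "Upair u w \<in># E1" unfolding E1_def mem_swap using uw dist by (auto simp: adj_def)
  have neq2: "Upair u x \<noteq> Upair u w" using dist by auto
  have cd2: "Upair u x \<in># E1 - {#Upair u w#}" by (rule mem_rem[OF _ neq2]) (simp add: E1_def)
  have nwx1: "Upair w x \<notin># E1" unfolding E1_def by (rule notmem_swap[OF n3]) (use dist in auto)
  define E2 where "E2 = E1 - {#Upair u w, Upair u x#} + {#Upair u u, Upair w x#}"
  note s2 = swap_E[OF ok1 ab2 cd2]
  have st2: "swap_step V k E1 E2" unfolding E2_def using s2(1) dist nwx1 by simp
  have mu2: "mu E2 = mu E" unfolding E2_def using s2(2) dist nwx1 mu1 by simp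
  have ok2: "multiloop_graph V E2" "\<forall>u\<in>V. deg E2 u = k u" using step_ok[OF st2] by auto
  have vx1: "Upair v x \<in># E1" by (simp add: E1_def)
  have ab3: "Upair v x \<in># E2" unfolding E2_def mem_swap using vx1 dist by auto
  have vz1: "Upair v z \<in># E1" unfolding E1_def mem_swap using vz dist by (auto simp: adj_def)
  have vz2: "Upair v z \<in># E2" unfolding E2_def mem_swap using vz1 dist by auto
  have neq3: "Upair v z \<noteq> Upair v x" using dist by auto
  have cd3: "Upair v z \<in># E2 - {#Upair v x#}" by (rule mem_rem[OF vz2 neq3])
  have nxz1: "Upair x z \<notin># E1" unfolding E1_def by (rule notmem_swap[OF n4]) (use dist in auto)
  have nxz2: "Upair x z \<notin># E2" unfolding E2_def by (rule notmem_swap[OF nxz1]) (use dist in auto)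
  define E3 where "E3 = E2 - {#Upair v x, Upair v z#} + {#Upair v v, Upair x z#}"
  note s3 = swap_E[OF ok2 ab3 cd3]
  have st3: "swap_step V k E2 E3" unfolding E3_def using s3(1) dist nxz2 by simp
  have mu3: "mu E3 < mu E" unfolding E3_def using s3(2) dist nxz2 mu2 by simp
  have "(swap_step V k)\<^sup>+\<^sup>+ E E3" using st1 st2 st3 by auto
  then show ?thesis using mu3 by auto
qed


lemma two_elems:
  assumes "finite S" "card S \<ge> 2"
  obtains v w where "v \<in> S" "w \<in> S" "v \<noteq> w"
proof -
  have "S \<noteq> {}" using assms by auto
  then obtain v where v: "v \<in> S" by auto
  have "card (S - {v}) \<ge> 1" using assms v by simp
  then have "S - {v} \<noteq> {}" by (metis card.empty not_one_le_zero)
  then obtain w where "w \<in> S - {v}" by auto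
  then show ?thesis using that v by auto
qed

lemma progress:
  fixes E :: "'a uprod multiset"
  assumes fin: "finite V" and cV: "card V = n"
    and kpos: "\<forall>u\<in>V. k u \<ge> 1"
    and hodd: "\<exists>u\<in>V. odd (k u)"
    and hv: "\<exists>v\<in>V. int (k v) - (int n - 1) < 0 \<or> odd (int (k v) - (int n - 1))"
    and ml: "multiloop_graph V E" and dg: "\<forall>u\<in>V. deg E u = k u"
    and ng: "\<exists>u\<in>V. count E (Upair u u) \<noteq> k u div 2"
  shows "\<exists>E'. (swap_step V k)\<^sup>+\<^sup>+ E E' \<and> mu E' < mu E"
proof -
  have mlc: "\<forall>u v. u \<noteq> v \<longrightarrow> count E (Upair u v) \<le> 1" using ml by (simp add: multiloop_graph_def)
  have gV: "\<forall>e\<in>#E. set_uprod e \<subseteq> V" using ml by (simp add: multiloop_graph_def graph_on_def)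
  have df: "k y = 2 * count E (Upair y y) + card (nb E y)" if "y \<in> V" for y
    using deg_formula[OF mlc, of y] dg that by simp
  have nbadj: "nb E y = {z. adj E y z}" for y by (auto simp: nb_def adj_def)
  have finnb: "finite (nb E y)" for y
  proof -
    have "nb E y \<subseteq> \<Union> (set_uprod ` set_mset E)" by (force simp: nb_def)
    then show ?thesis by (rule finite_subset) auto
  qed
  obtain u where uV: "u \<in> V" and cu: "count E (Upair u u) \<noteq> k u div 2" using ng by blast
  have c2: "card (nb E u) \<ge> 2"
  proof (rule ccontr)
    assume "\<not> ?thesis"
    then have "card (nb E u) \<le> 1" by simp
    then have "k u div 2 = count E (Upair u u)" using df[OF uV] by presburger
    then show False using cu by simp
  qed
  obtain v w where v: "v \<in> nb E u" and w: "w \<in> nb E u" and vw: "v \<noteq> w"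
    using two_elems[OF finnb c2] by blast
  have uv: "adj E u v" and uw: "adj E u w" using v w nbadj by auto
  show ?thesis
  proof (cases "\<forall>a b c. adj E a b \<longrightarrow> adj E a c \<longrightarrow> b \<noteq> c \<longrightarrow> adj E b c")
    case False
    then obtain a b c where "adj E a b" "adj E a c" "b \<noteq> c" "\<not> adj E b c" by blast
    moreover then have "Upair b c \<notin># E" by (simp add: adj_def)
    ultimately show ?thesis using op1[OF ml dg] by blast
  next
    case LC: True
    show ?thesis
    proof (cases "\<exists>x y. adj E x y \<and> x \<noteq> u \<and> Upair u x \<notin># E")
      case True
      then obtain x y where "adj E x y" "x \<noteq> u" "Upair u x \<notin># E" by blast
      then show ?thesis using opA[OF ml dg LC uv uw vw] by blast
    next
      case False
      then have cl: "\<And>x y. adj E x y \<Longrightarrow> x = u \<or> Upair u x \<in># E" by blast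
      define N where "N = insert u (nb E u)"
      have unb: "u \<notin> nb E u" by (simp add: nb_def)
      have nbN: "nb E y = N - {y}" if "y \<in> N" for y
      proof (cases "y = u")
        case True then show ?thesis using unb by (auto simp: N_def)
      next
        case False
        then have yu: "adj E u y" using that nbadj by (auto simp: N_def)
        show ?thesis
        proof
          show "nb E y \<subseteq> N - {y}"
          proof
            fix z assume "z \<in> nb E y"
            then have "adj E y z" using nbadj by auto
            then have "adj E z y" "z \<noteq> y" using adj_sym[of E y z] by (auto simp: adj_def)
            then have "z = u \<or> Upair u z \<in># E" "z \<noteq> y" using cl by auto
            then show "z \<in> N - {y}" by (auto simp: N_def nb_def)
          qed
          show "N - {y} \<subseteq> nb E y"
          proof
            fix t assume t: "t \<in> N - {y}"
            have "adj E y t"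
            proof (cases "t = u")
              case True then show ?thesis using yu adj_sym[of E u y] by simp
            next
              case False
              then have "adj E u t" using t nbadj by (auto simp: N_def)
              moreover have "y \<noteq> t" using t by auto
              ultimately show ?thesis using LC yu by blast
            qed
            then show "t \<in> nb E y" using nbadj by auto
          qed
        qed
      qed
      have iso: "\<forall>t. \<not> adj E x t" if "x \<notin> N" for x
      proof (intro allI notI)
        fix t assume "adj E x t"
        then have "x = u \<or> Upair u x \<in># E" using cl by blast
        moreover have "x \<noteq> u" using that by (simp add: N_def)
        ultimately have "x \<in> nb E u" by (auto simp: nb_def)
        then show False using that by (simp add: N_def)
      qed
      have NV: "N \<subseteq> V"
      proof -
        have "nb E u \<subseteq> V" using gV by (force simp: nb_def)
        then show ?thesis using uV by (simp add: N_def)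
      qed
      have finN: "finite N" using finnb by (simp add: N_def)
      have cN: "card N = Suc (card (nb E u))" using unb finnb by (simp add: N_def)
      have cnb: "card (nb E y) = card (nb E u)" if "y \<in> N" for y
        using nbN[OF that] that finN cN by simp
      show ?thesis
      proof (cases "V \<subseteq> N")
        case True
        then have NeqV: "N = V" using NV by blast
        then have cn: "card (nb E u) = n - 1" using cN cV by simp
        have "card V > 0" using fin uV card_gt_0_iff by blast
        then have "n \<ge> 1" using cV by simp
        obtain y where yV: "y \<in> V" and hy: "int (k y) - (int n - 1) < 0 \<or> odd (int (k y) - (int n - 1))"
          using hv by blast
        have "k y = 2 * count E (Upair y y) + (n - 1)" using df[OF yV] cnb[of y] NeqV yV cn by simp
        then have "int (k y) - (int n - 1) = 2 * int (count E (Upair y y))" using \<open>n \<ge> 1\<close> by simp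
        then show ?thesis using hy by simp
      next
        case False
        then obtain x where xV: "x \<in> V" and xN: "x \<notin> N" by blast
        have isox: "\<forall>t. \<not> adj E x t" using iso[OF xN] .
        have "nb E x = {}" using isox nbadj by simp
        then have "k x = 2 * count E (Upair x x)" using df[OF xV] by simp
        then have xx: "Upair x x \<in># E" using kpos xV by (metis count_inI le_zero_eq mult_0_right not_one_le_zero)
        show ?thesis
        proof (cases "card (nb E u) \<ge> 3")
          case True
          then have "card (nb E u - {v, w}) \<ge> 1" using v w vw finnb by (simp add: card_Diff_subset)
          then have "nb E u - {v, w} \<noteq> {}" by (metis card.empty not_one_le_zero)
          then obtain z where z: "z \<in> nb E u" "z \<noteq> v" "z \<noteq> w" by auto
          have uz: "adj E u z" using z nbadj by auto
          show ?thesis using opB[OF ml dg LC uv uw uz vw _ _ xx isox] z by auto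
        next
          case False
          then have c2': "card (nb E u) = 2" using c2 by simp
          have "even (k y)" if yV: "y \<in> V" for y
          proof (cases "y \<in> N")
            case True
            then show ?thesis using df[OF yV] cnb[OF True] c2' by simp
          next
            case False
            then have "nb E y = {}" using iso[OF False] nbadj by simp
            then show ?thesis using df[OF yV] by simp
          qed
          then show ?thesis using hodd by blast
        qed
      qed
    qed
  qed
qed


lemma ok_rtrancl:
  assumes "(swap_step V k)\<^sup>*\<^sup>* E E'" "multiloop_graph V E \<and> (\<forall>u\<in>V. deg E u = k u)"
  shows "multiloop_graph V E' \<and> (\<forall>u\<in>V. deg E' u = k u)"
  using assms by (induction rule: rtranclp_induct) (auto dest: step_ok)

theorem mainTheorem3:
  fixes V :: "'a set" and n :: nat and k :: "'a \<Rightarrow> nat" and G :: "'a uprod multiset"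
  assumes "finite V" and "card V = n"
    and "\<forall>u\<in>V. k u \<ge> 1"
    and "\<exists>u\<in>V. odd (k u)"
    and "\<exists>v\<in>V. int (k v) - (int n - 1) < 0 \<or> odd (int (k v) - (int n - 1))"
    and "multiloop_graph V G" and "\<forall>u\<in>V. deg G u = k u"
  shows "\<exists>H. (swap_step V k)\<^sup>*\<^sup>* G H \<and> multiloop_graph V H \<and> (\<forall>u\<in>V. deg H u = k u) \<and>
             (\<forall>u\<in>V. count H (Upair u u) = k u div 2)"
proof -
  have main: "\<forall>E. mu E = m \<longrightarrow> multiloop_graph V E \<longrightarrow> (\<forall>u\<in>V. deg E u = k u) \<longrightarrow>
    (\<exists>H. (swap_step V k)\<^sup>*\<^sup>* E H \<and> multiloop_graph V H \<and> (\<forall>u\<in>V. deg H u = k u) \<and>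
             (\<forall>u\<in>V. count H (Upair u u) = k u div 2))" for m
  proof (induction m rule: less_induct)
    case (less m)
    show ?case
    proof (intro allI impI)
      fix E :: "'a uprod multiset"
      assume mE: "mu E = m" and ml: "multiloop_graph V E" and dg: "\<forall>u\<in>V. deg E u = k u"
      show "\<exists>H. (swap_step V k)\<^sup>*\<^sup>* E H \<and> multiloop_graph V H \<and> (\<forall>u\<in>V. deg H u = k u) \<and>
             (\<forall>u\<in>V. count H (Upair u u) = k u div 2)"
      proof (cases "\<forall>u\<in>V. count E (Upair u u) = k u div 2")
        case True
        then show ?thesis using ml dg by blast
      next
        case False
        then obtain E' where st: "(swap_step V k)\<^sup>+\<^sup>+ E E'" and lt: "mu E' < mu E"
          using progress[OF assms(1-5) ml dg] by blast
        have st': "(swap_step V k)\<^sup>*\<^sup>* E E'" using st by (rule tranclp_into_rtranclp)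
        have ok: "multiloop_graph V E' \<and> (\<forall>u\<in>V. deg E' u = k u)"
          using ok_rtrancl[OF st'] ml dg by blast
        obtain H where H: "(swap_step V k)\<^sup>*\<^sup>* E' H" "multiloop_graph V H" "\<forall>u\<in>V. deg H u = k u"
          "\<forall>u\<in>V. count H (Upair u u) = k u div 2"
          using less[of "mu E'"] lt mE ok by blast
        have "(swap_step V k)\<^sup>*\<^sup>* E H" using st' H(1) by (rule rtranclp_trans)
        then show ?thesis using H by blast
      qed
    qed
  qed
  show ?thesis using main assms(6,7) by blast
qed

end
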